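(* Let $(X,\omega)$ be a Hermitian manifold and $t,s\in\mathbb{R}$. If ${}^t\mathrm{HSC}_\omega(v)={}^s\mathrm{HSC}_\omega(v)$ for all nonzero $v\in T^{1,0}X$, then $t=s$, or $t=2-s$, or $\omega$ is Kähler.
   Context: Let $(X,\omega)$ be a Hermitian manifold with metric $g$; ${}^c\nabla$ is the Chern connection on $T^{1,0}X$, ${}^l\nabla$ the Lichnerowicz connection (the $T^{1,0}$-component of the complexified Levi-Civita connection), and ${}^t\nabla=t\,{}^c\nabla+(1-t)\,{}^l\nabla$ the $t$-Gauduchon connection, with curvature ${}^tR(x,y)=[{}^t\nabla_x,{}^t\nabla_y]-{}^t\nabla_{[x,y]}$. The $t$-Gauduchon holomorphic sectional curvature is ${}^t\mathrm{HSC}_\omega(v)=g({}^tR(v,\bar v)v,\bar v)/|v|^4$ for $0\ne v\in T^{1,0}X$. *)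

theory Defs
  imports "HOL-Analysis.Analysis"
begin

text \<open>Everything is done in a holomorphic chart: an open set U of C^n with holomorphic
coordinates z_1..z_n. A Hermitian metric is given by its coefficient matrix
h z $ i $ j = g(d/dz_i, d/d(conj z_j)) = g_{i jbar}.
Indices of the complexified tangent space: Inl i = d/dz_i, Inr i = d/d(conj z_i).\<close>

inductive_set iter_derivs :: "('a::real_normed_vector \<Rightarrow> 'b::real_normed_vector) \<Rightarrow> ('a \<Rightarrow> 'b) set"
  for f where
  base: "f \<in> iter_derivs f"
| step: "g \<in> iter_derivs f \<Longrightarrow> (\<lambda>x. frechet_derivative g (at x) v) \<in> iter_derivs f"

definition smooth_on :: "'a::real_normed_vector set \<Rightarrow> ('a \<Rightarrow> 'b::real_normed_vector) \<Rightarrow> bool" where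
  "smooth_on U f \<longleftrightarrow> (\<forall>g \<in> iter_derivs f. \<forall>x\<in>U. g differentiable (at x))"

definition hermitian_metric_on :: "(complex^'n) set \<Rightarrow> (complex^'n \<Rightarrow> complex^'n^'n) \<Rightarrow> bool" where
  "hermitian_metric_on U h \<longleftrightarrow>
     (\<forall>i j. smooth_on U (\<lambda>z. h z $ i $ j)) \<and>
     (\<forall>z\<in>U. \<forall>i j. h z $ j $ i = cnj (h z $ i $ j)) \<and>
     (\<forall>z\<in>U. \<forall>v::complex^'n. v \<noteq> 0 \<longrightarrow> Re (\<Sum>i\<in>UNIV. \<Sum>j\<in>UNIV. v $ i * h z $ i $ j * cnj (v $ j)) > 0)"

definition wirt :: "('n::finite + 'n) \<Rightarrow> (complex^'n \<Rightarrow> complex) \<Rightarrow> complex^'n \<Rightarrow> complex" where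
  "wirt A f z = (case A of
      Inl i \<Rightarrow> (frechet_derivative f (at z) (axis i 1) - \<i> * frechet_derivative f (at z) (axis i \<i>)) / 2
    | Inr i \<Rightarrow> (frechet_derivative f (at z) (axis i 1) + \<i> * frechet_derivative f (at z) (axis i \<i>)) / 2)"

text \<open>The complexified (C-bilinear) metric in the frame (d/dz, d/d(conj z)).\<close>
definition bigG :: "(complex^'n \<Rightarrow> complex^'n^'n) \<Rightarrow> complex^'n \<Rightarrow> complex^('n::finite + 'n)^('n + 'n)" where
  "bigG h z = (\<chi> A B. case (A, B) of
       (Inl i, Inr j) \<Rightarrow> h z $ i $ j
     | (Inr j, Inl i) \<Rightarrow> h z $ i $ j
     | _ \<Rightarrow> 0)"

text \<open>Christoffel symbols of the (complexified) Levi-Civita connection: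
  LC_{d_A} d_B = sum_C Gamma^C_{AB} d_C.\<close>
definition LC_christ :: "(complex^'n \<Rightarrow> complex^'n^'n) \<Rightarrow> ('n::finite + 'n) \<Rightarrow> ('n + 'n) \<Rightarrow> ('n + 'n) \<Rightarrow> complex^'n \<Rightarrow> complex" where
  "LC_christ h C A B z = (1/2) * (\<Sum>D\<in>UNIV. matrix_inv (bigG h z) $ C $ D *
      (wirt A (\<lambda>w. bigG h w $ B $ D) z + wirt B (\<lambda>w. bigG h w $ A $ D) z - wirt D (\<lambda>w. bigG h w $ A $ B) z))"

text \<open>Lichnerowicz connection on T^{1,0}: the (1,0)-part of LC.
  lnabla_{d_A} d_j = sum_k (lich_christ h k A j) d_k.\<close>
definition lich_christ :: "(complex^'n \<Rightarrow> complex^'n^'n) \<Rightarrow> 'n::finite \<Rightarrow> ('n + 'n) \<Rightarrow> 'n \<Rightarrow> complex^'n \<Rightarrow> complex" where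
  "lich_christ h k A j z = LC_christ h (Inl k) A (Inl j) z"

text \<open>Chern connection on T^{1,0}: its (0,1)-part is dbar (so cnabla_{d/d(conj z_i)} d_j = 0) and
  it is metric compatible: sum_l Gamma^l_{ij} g_{l kbar} = d_i g_{j kbar}.\<close>
definition chern_christ :: "(complex^'n \<Rightarrow> complex^'n^'n) \<Rightarrow> 'n::finite \<Rightarrow> ('n + 'n) \<Rightarrow> 'n \<Rightarrow> complex^'n \<Rightarrow> complex" where
  "chern_christ h k A j z = (case A of
      Inl i \<Rightarrow> (\<Sum>l\<in>UNIV. wirt (Inl i) (\<lambda>w. h w $ j $ l) z * matrix_inv (h z) $ l $ k)
    | Inr i \<Rightarrow> 0)"

definition gaud_christ :: "real \<Rightarrow> (complex^'n \<Rightarrow> complex^'n^'n) \<Rightarrow> 'n::finite \<Rightarrow> ('n + 'n) \<Rightarrow> 'n \<Rightarrow> complex^'n \<Rightarrow> complex" where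
  "gaud_christ t h k A j z = complex_of_real t * chern_christ h k A j z
                           + complex_of_real (1 - t) * lich_christ h k A j z"

text \<open>Curvature R(x,y) = [nabla_x, nabla_y] - nabla_[x,y] on coordinate fields (which commute):
  tR(d_A, d_B) d_j = sum_k (gaud_curv t h k A B j z) d_k.\<close>
definition gaud_curv :: "real \<Rightarrow> (complex^'n \<Rightarrow> complex^'n^'n) \<Rightarrow> 'n::finite \<Rightarrow> ('n + 'n) \<Rightarrow> ('n + 'n) \<Rightarrow> 'n \<Rightarrow> complex^'n \<Rightarrow> complex" where
  "gaud_curv t h k A B j z =
     wirt A (gaud_christ t h k B j) z - wirt B (gaud_christ t h k A j) z
     + (\<Sum>m\<in>UNIV. gaud_christ t h m B j z * gaud_christ t h k A m z
            - gaud_christ t h m A j z * gaud_christ t h k B m z)"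

text \<open>t-Gauduchon holomorphic sectional curvature at z in direction v = sum_i v_i d/dz_i:
  g(tR(v, vbar) v, vbar) / |v|^4.\<close>
definition gaud_HSC :: "real \<Rightarrow> (complex^'n \<Rightarrow> complex^'n^'n) \<Rightarrow> complex^'n \<Rightarrow> complex^'n::finite \<Rightarrow> complex" where
  "gaud_HSC t h z v =
     (\<Sum>k\<in>UNIV. \<Sum>m\<in>UNIV. (\<Sum>i\<in>UNIV. \<Sum>j\<in>UNIV. \<Sum>l\<in>UNIV. v $ i * cnj (v $ j) * v $ l * gaud_curv t h k (Inl i) (Inr j) l z)
               * cnj (v $ m) * h z $ k $ m)
     / (\<Sum>i\<in>UNIV. \<Sum>j\<in>UNIV. v $ i * cnj (v $ j) * h z $ i $ j) ^ 2"

text \<open>Kaehler: d omega = 0 where omega = i sum g_{i jbar} dz_i ^ d(conj z_j), i.e.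
  d_k g_{i jbar} = d_i g_{k jbar} (partial omega = 0) and
  dbar_k g_{i jbar} = dbar_j g_{i kbar} (dbar omega = 0).\<close>
definition kahler_on :: "(complex^'n) set \<Rightarrow> (complex^'n \<Rightarrow> complex^'n^'n) \<Rightarrow> bool" where
  "kahler_on U h \<longleftrightarrow> (\<forall>z\<in>U. \<forall>i j k.
      wirt (Inl k) (\<lambda>w. h w $ i $ j) z = wirt (Inl i) (\<lambda>w. h w $ k $ j) z \<and>
      wirt (Inr k) (\<lambda>w. h w $ i $ j) z = wirt (Inr j) (\<lambda>w. h w $ i $ k) z)"

end

theory Submission
  imports Defs
begin


definition wL :: "('n::finite + 'n) \<Rightarrow> (complex^'n \<Rightarrow> complex) \<Rightarrow> complex" where
 "wL A D = (case A of Inl i \<Rightarrow> (D (axis i 1) - \<i> * D (axis i \<i>))/2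
    | Inr i \<Rightarrow> (D (axis i 1) + \<i> * D (axis i \<i>))/2)"

lemma wirt_eq_wL: "wirt A f z = wL A (frechet_derivative f (at z))"
  by (simp add: wirt_def wL_def split: sum.split)

lemma wirt_hasD: "(f has_derivative D) (at z) \<Longrightarrow> wirt A f z = wL A D"
  using frechet_derivative_at wirt_eq_wL by metis

lemma fd_works: "f differentiable (at z) \<Longrightarrow> (f has_derivative frechet_derivative f (at z)) (at z)"
  using frechet_derivative_works by blast

lemma wirt_add:
  assumes "f differentiable (at z)" "g differentiable (at z)"
  shows "wirt A (\<lambda>w. f w + g w) z = wirt A f z + wirt A g z"
proof -
  have "wirt A (\<lambda>w. f w + g w) z = wL A (\<lambda>x. frechet_derivative f (at z) x + frechet_derivative g (at z) x)"
    by (rule wirt_hasD, intro has_derivative_add fd_works assms)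
  also have "\<dots> = wirt A f z + wirt A g z"
    by (cases A) (simp_all add: wirt_eq_wL wL_def field_simps)
  finally show ?thesis .
qed

lemma wirt_diff:
  assumes "f differentiable (at z)" "g differentiable (at z)"
  shows "wirt A (\<lambda>w. f w - g w) z = wirt A f z - wirt A g z"
proof -
  have "wirt A (\<lambda>w. f w - g w) z = wL A (\<lambda>x. frechet_derivative f (at z) x - frechet_derivative g (at z) x)"
    by (rule wirt_hasD, intro has_derivative_diff fd_works assms)
  also have "\<dots> = wirt A f z - wirt A g z"
    by (cases A) (simp_all add: wirt_eq_wL wL_def field_simps)
  finally show ?thesis .
qed

lemma wirt_mult:
  assumes "f differentiable (at z)" "g differentiable (at z)"
  shows "wirt A (\<lambda>w. f w * g w) z = f z * wirt A g z + wirt A f z * g z"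
proof -
  have "wirt A (\<lambda>w. f w * g w) z = wL A (\<lambda>x. f z * frechet_derivative g (at z) x + frechet_derivative f (at z) x * g z)"
    by (rule wirt_hasD, intro has_derivative_mult fd_works assms)
  also have "\<dots> = f z * wirt A g z + wirt A f z * g z"
    by (cases A) (simp_all add: wirt_eq_wL wL_def field_simps)
  finally show ?thesis .
qed

lemma wirt_const: "wirt A (\<lambda>w. c) z = 0"
  by (simp add: wirt_eq_wL wL_def split: sum.split)

lemma wirt_cmult:
  assumes "f differentiable (at z)"
  shows "wirt A (\<lambda>w. c * f w) z = c * wirt A f z"
  using wirt_mult[OF differentiable_const assms, of A c] by (simp add: wirt_const)

lemma wirt_sum:
  assumes "finite S" "\<And>a. a \<in> S \<Longrightarrow> f a differentiable (at z)"
  shows "wirt A (\<lambda>w. \<Sum>a\<in>S. f a w) z = (\<Sum>a\<in>S. wirt A (f a) z)"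
  using assms
proof (induction S rule: finite_induct)
  case empty
  then show ?case by (simp add: wirt_const)
next
  case (insert x F)
  have "wirt A (\<lambda>w. \<Sum>a\<in>insert x F. f a w) z = wirt A (\<lambda>w. f x w + (\<Sum>a\<in>F. f a w)) z"
    using insert by simp
  also have "\<dots> = wirt A (f x) z + wirt A (\<lambda>w. \<Sum>a\<in>F. f a w) z"
    using insert by (intro wirt_add) (auto intro!: differentiable_sum)
  finally show ?case using insert by simp
qed

lemma fd_cong_open:
  assumes "open X" "x \<in> X" "\<And>y. y \<in> X \<Longrightarrow> f y = g y"
  shows "frechet_derivative f (at x) = frechet_derivative g (at x)"
proof -
  have "\<And>D. (f has_derivative D) (at x) \<longleftrightarrow> (g has_derivative D) (at x)"
    using assms has_derivative_transform_within_open by (metis (no_types, lifting))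
  then show ?thesis unfolding frechet_derivative_def by simp
qed

lemma wirt_cong_open:
  assumes "open X" "x \<in> X" "\<And>y. y \<in> X \<Longrightarrow> f y = g y"
  shows "wirt A f x = wirt A g x"
  using fd_cong_open[OF assms] by (simp add: wirt_eq_wL)

lemma diff_cong_open:
  assumes "f differentiable (at x)" "open X" "x \<in> X" "\<And>y. y \<in> X \<Longrightarrow> f y = g y"
  shows "g differentiable (at x)"
  using assms has_derivative_transform_within_open unfolding differentiable_def by blast

lemma wirt_cnj:
  assumes "f differentiable (at z)"
  shows "wirt (Inr j) (\<lambda>w. cnj (f w)) z = cnj (wirt (Inl j) f z)"
proof -
  have "wirt (Inr j) (\<lambda>w. cnj (f w)) z = wL (Inr j) (\<lambda>x. cnj (frechet_derivative f (at z) x))"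
    by (rule wirt_hasD, intro has_derivative_cnj fd_works assms)
  also have "\<dots> = cnj (wirt (Inl j) f z)"
    by (simp add: wirt_eq_wL wL_def)
  finally show ?thesis .
qed

lemma diff_wirt:
  assumes "smooth_on U f" "z \<in> U"
  shows "(\<lambda>w. wirt A f w) differentiable (at z)"
proof -
  have d: "(\<lambda>x. frechet_derivative f (at x) v) differentiable (at z)" for v
  proof -
    have "(\<lambda>x. frechet_derivative f (at x) v) \<in> iter_derivs f"
      by (rule iter_derivs.step[OF iter_derivs.base])
    then show ?thesis using assms unfolding smooth_on_def by blast
  qed
  show ?thesis unfolding wirt_def
    by (cases A) (auto intro!: derivative_intros d)
qed

lemma diff_smooth:
  assumes "smooth_on U f" "z \<in> U"
  shows "f differentiable (at z)"
  using assms unfolding smooth_on_def by (meson iter_derivs.base)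



lemma inv_unique:
  fixes A :: "'a::comm_ring_1^'n::finite^'n"
  assumes "A ** B = mat 1" "B ** A = mat 1"
  shows "matrix_inv A = B"
  unfolding matrix_inv_def
proof (rule some_equality)
  show "A ** B = mat 1 \<and> B ** A = mat 1" using assms by blast
next
  fix B' assume "A ** B' = mat 1 \<and> B' ** A = mat 1"
  then have "B' = B' ** (A ** B)" "B' ** A = mat 1" using assms by auto
  then show "B' = B" by (metis matrix_mul_assoc matrix_mul_lid)
qed

lemma inv_props:
  fixes A :: "complex^'n::finite^'n"
  assumes "det A \<noteq> 0"
  shows "A ** matrix_inv A = mat 1" "matrix_inv A ** A = mat 1"
proof -
  have "invertible A" using assms invertible_det_nz by blast
  then have "\<exists>B. A ** B = mat 1 \<and> B ** A = mat 1" unfolding invertible_def by blast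
  then have "A ** matrix_inv A = mat 1 \<and> matrix_inv A ** A = mat 1"
    unfolding matrix_inv_def by (rule someI_ex)
  then show "A ** matrix_inv A = mat 1" "matrix_inv A ** A = mat 1" by auto
qed

lemma sum_delta_mult:
  fixes f :: "'n::finite \<Rightarrow> 'a::semiring_1"
  shows "(\<Sum>j\<in>UNIV. f j * (if j = k then 1 else 0)) = f k"
    "(\<Sum>j\<in>UNIV. (if j = k then 1 else 0) * f j) = f k"
proof -
  have e: "(\<lambda>j. f j * (if j = k then 1 else 0)) = (\<lambda>j. if j = k then f j else 0)"
       "(\<lambda>j. (if j = k then 1 else 0) * f j) = (\<lambda>j. if j = k then f j else 0)" by auto
  show "(\<Sum>j\<in>UNIV. f j * (if j = k then 1 else 0)) = f k"
    "(\<Sum>j\<in>UNIV. (if j = k then 1 else 0) * f j) = f k" unfolding e by simp_all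
qed

lemma inv_cramer:
  fixes A :: "complex^'n::finite^'n"
  assumes "det A \<noteq> 0"
  shows "matrix_inv A $ q $ k = det (\<chi> i j. if j = q then axis k 1 $ i else A $ i $ j) / det A"
proof -
  let ?x = "matrix_inv A *v axis k 1"
  have "A *v ?x = axis k 1"
    by (simp only: matrix_vector_mul_assoc inv_props(1)[OF assms] matrix_vector_mul_lid)
  from iffD1[OF cramer[OF assms] this]
  have "?x = (\<chi> q. det (\<chi> i j. if j = q then axis k 1 $ i else A $ i $ j) / det A)" .
  then have "?x $ q = det (\<chi> i j. if j = q then axis k 1 $ i else A $ i $ j) / det A" by (simp only: vec_lambda_beta)
  moreover have "?x $ q = matrix_inv A $ q $ k"
    by (simp add: matrix_vector_mult_def axis_def sum_delta_mult)
  ultimately show ?thesis by simp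
qed

lemma differentiable_prod:
  fixes f :: "'i \<Rightarrow> 'a::real_normed_vector \<Rightarrow> 'b::real_normed_field"
  assumes "\<And>i. i \<in> I \<Longrightarrow> f i differentiable (at x)"
  shows "(\<lambda>x. \<Prod>i\<in>I. f i x) differentiable (at x)"
proof -
  have *: "\<And>i. i \<in> I \<Longrightarrow> (f i has_derivative frechet_derivative (f i) (at x)) (at x)"
    using assms fd_works by blast
  have "((\<lambda>x. \<Prod>i\<in>I. f i x) has_derivative
     (\<lambda>y. \<Sum>i\<in>I. frechet_derivative (f i) (at x) y * (\<Prod>j\<in>I - {i}. f j x))) (at x)"
    by (rule has_derivative_prod) (rule *)
  then show ?thesis unfolding differentiable_def by blast
qed

lemma diff_det:
  fixes M :: "'a::real_normed_vector \<Rightarrow> complex^'n::finite^'n"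
  assumes "\<And>i j. (\<lambda>w. M w $ i $ j) differentiable (at z)"
  shows "(\<lambda>w. det (M w)) differentiable (at z)"
  unfolding det_def
proof -
  have "\<And>p. (\<lambda>w. \<Prod>i\<in>UNIV. M w $ i $ p i) differentiable (at z)"
    by (rule differentiable_prod) (rule assms)
  then have "\<And>p. (\<lambda>w. of_int (sign p) * (\<Prod>i\<in>UNIV. M w $ i $ p i)) differentiable (at z)"
    by (rule differentiable_mult[OF differentiable_const])
  then show "(\<lambda>w. \<Sum>p\<in>{p. p permutes UNIV}. of_int (sign p) * (\<Prod>i\<in>UNIV. M w $ i $ p i)) differentiable (at z)"
    by (intro differentiable_sum) auto
qed



lemma sum_UNIV_plus:
  fixes f :: "('a::finite + 'b::finite) \<Rightarrow> 'c::comm_monoid_add"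
  shows "(\<Sum>A\<in>UNIV. f A) = (\<Sum>i\<in>UNIV. f (Inl i)) + (\<Sum>i\<in>UNIV. f (Inr i))"
proof -
  have "(\<Sum>A\<in>UNIV. f A) = (\<Sum>A\<in>(UNIV <+> UNIV). f A)" by simp
  also have "\<dots> = (\<Sum>i\<in>UNIV. f (Inl i)) + (\<Sum>i\<in>UNIV. f (Inr i))"
    by (subst sum.Plus) auto
  finally show ?thesis .
qed

locale hsetup =
  fixes U :: "(complex^'n::finite) set" and h :: "complex^'n \<Rightarrow> complex^'n^'n"
  assumes Uopen: "open U" and hm: "hermitian_metric_on U h"
begin

abbreviation Hi where "Hi w \<equiv> matrix_inv (h w)"

lemma smooth_hh: "smooth_on U (\<lambda>w. h w $ i $ j)"
  using hm unfolding hermitian_metric_on_def by blast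

lemma herm: "w \<in> U \<Longrightarrow> h w $ j $ i = cnj (h w $ i $ j)"
  using hm unfolding hermitian_metric_on_def by blast

lemma posdef: "w \<in> U \<Longrightarrow> v \<noteq> 0 \<Longrightarrow> Re (\<Sum>i\<in>UNIV. \<Sum>j\<in>UNIV. v $ i * h w $ i $ j * cnj (v $ j)) > 0"
  using hm unfolding hermitian_metric_on_def by blast

lemma det_nz:
  assumes w: "w \<in> U"
  shows "det (h w) \<noteq> 0"
proof -
  have ker: "y = 0" if "h w *v y = 0" for y
  proof (rule ccontr)
    assume "y \<noteq> 0"
    let ?v = "\<chi> i. cnj (y $ i)"
    have "?v \<noteq> 0"
    proof
      assume "?v = 0"
      then have "\<And>i. cnj (y $ i) = 0" by (metis vec_lambda_beta zero_index)
      then have "y = 0" by (simp add: vec_eq_iff)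
      then show False using \<open>y \<noteq> 0\<close> by simp
    qed
    then have pos: "Re (\<Sum>i\<in>UNIV. \<Sum>j\<in>UNIV. ?v $ i * h w $ i $ j * cnj (?v $ j)) > 0" using posdef w by blast
    have "(\<Sum>i\<in>UNIV. \<Sum>j\<in>UNIV. ?v $ i * h w $ i $ j * cnj (?v $ j)) = (\<Sum>i\<in>UNIV. ?v $ i * (h w *v y) $ i)"
      by (simp add: matrix_vector_mult_def sum_distrib_left mult.assoc)
    also have "\<dots> = 0" using that by simp
    finally show False using pos by simp
  qed
  have "inj ((*v) (h w))"
  proof (rule injI)
    fix x y assume "h w *v x = h w *v y"
    then have "h w *v (x - y) = 0" by (simp add: matrix_vector_mult_diff_distrib)
    then have "x - y = 0" using ker by blast
    then show "x = y" by simp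
  qed
  then show ?thesis
    using det_nz_iff_inj_gen[OF matrix_vector_mul_linear_gen, of "h w"] by simp
qed

lemma Hi_mat: "w \<in> U \<Longrightarrow> h w ** Hi w = mat 1" "w \<in> U \<Longrightarrow> Hi w ** h w = mat 1"
  using inv_props det_nz by auto

lemma HiL: "w \<in> U \<Longrightarrow> (\<Sum>k\<in>UNIV. Hi w $ q $ k * h w $ k $ m) = (if q = m then 1 else 0)"
proof -
  assume w: "w \<in> U"
  have "(Hi w ** h w) $ q $ m = mat 1 $ q $ m" using Hi_mat(2)[OF w] by simp
  then show ?thesis by (simp add: matrix_matrix_mult_def mat_def)
qed

lemma HiR: "w \<in> U \<Longrightarrow> (\<Sum>k\<in>UNIV. h w $ q $ k * Hi w $ k $ m) = (if q = m then 1 else 0)"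
proof -
  assume w: "w \<in> U"
  have "(h w ** Hi w) $ q $ m = mat 1 $ q $ m" using Hi_mat(1)[OF w] by simp
  then show ?thesis by (simp add: matrix_matrix_mult_def mat_def)
qed

definition Gi :: "complex^'n \<Rightarrow> complex^('n + 'n)^('n + 'n)" where
  "Gi w = (\<chi> A B. case A of Inl k \<Rightarrow> (case B of Inl q \<Rightarrow> 0 | Inr q \<Rightarrow> Hi w $ q $ k)
                          | Inr q \<Rightarrow> (case B of Inl k \<Rightarrow> Hi w $ q $ k | Inr _ \<Rightarrow> 0))"

lemma GG1: "w \<in> U \<Longrightarrow> (bigG h w ** Gi w) $ Inl a $ Inl c = mat 1 $ Inl a $ Inl c"
  using HiR[of w a c]
  by (simp add: matrix_matrix_mult_def mat_def sum_UNIV_plus bigG_def Gi_def)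

lemma GG2: "w \<in> U \<Longrightarrow> (bigG h w ** Gi w) $ Inr a $ Inr c = mat 1 $ Inr a $ Inr c"
proof -
  assume w: "w \<in> U"
  have e: "(\<Sum>i\<in>UNIV. h w $ i $ a * Hi w $ c $ i) = (\<Sum>i\<in>UNIV. Hi w $ c $ i * h w $ i $ a)"
    by (simp add: mult.commute)
  show ?thesis using HiL[OF w, of c a]
    by (simp add: matrix_matrix_mult_def mat_def sum_UNIV_plus bigG_def Gi_def e eq_commute[of a c])
qed

lemma GG3: "(bigG h w ** Gi w) $ Inl a $ Inr c = mat 1 $ Inl a $ Inr c"
  by (simp add: matrix_matrix_mult_def mat_def sum_UNIV_plus bigG_def Gi_def)

lemma GG4: "(bigG h w ** Gi w) $ Inr a $ Inl c = mat 1 $ Inr a $ Inl c"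
  by (simp add: matrix_matrix_mult_def mat_def sum_UNIV_plus bigG_def Gi_def)

lemma GG5: "w \<in> U \<Longrightarrow> (Gi w ** bigG h w) $ Inl a $ Inl c = mat 1 $ Inl a $ Inl c"
proof -
  assume w: "w \<in> U"
  have e: "(\<Sum>i\<in>UNIV. Hi w $ i $ a * h w $ c $ i) = (\<Sum>i\<in>UNIV. h w $ c $ i * Hi w $ i $ a)"
    by (simp add: mult.commute)
  show ?thesis using HiR[OF w, of c a]
    by (simp add: matrix_matrix_mult_def mat_def sum_UNIV_plus bigG_def Gi_def e eq_commute[of a c])
qed

lemma GG6: "w \<in> U \<Longrightarrow> (Gi w ** bigG h w) $ Inr a $ Inr c = mat 1 $ Inr a $ Inr c"
  using HiL[of w a c]
  by (simp add: matrix_matrix_mult_def mat_def sum_UNIV_plus bigG_def Gi_def)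

lemma GG7: "(Gi w ** bigG h w) $ Inl a $ Inr c = mat 1 $ Inl a $ Inr c"
  by (simp add: matrix_matrix_mult_def mat_def sum_UNIV_plus bigG_def Gi_def)

lemma GG8: "(Gi w ** bigG h w) $ Inr a $ Inl c = mat 1 $ Inr a $ Inl c"
  by (simp add: matrix_matrix_mult_def mat_def sum_UNIV_plus bigG_def Gi_def)

lemma Ginv:
  assumes w: "w \<in> U"
  shows "matrix_inv (bigG h w) = Gi w"
proof (rule inv_unique)
  have "(bigG h w ** Gi w) $ A $ C = mat 1 $ A $ C" for A C
    by (cases A; cases C) (simp_all only: GG1[OF w] GG2[OF w] GG3 GG4)
  then show "bigG h w ** Gi w = mat 1" by (simp add: vec_eq_iff)
  have "(Gi w ** bigG h w) $ A $ C = mat 1 $ A $ C" for A C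
    by (cases A; cases C) (simp_all only: GG5[OF w] GG6[OF w] GG7 GG8)
  then show "Gi w ** bigG h w = mat 1" by (simp add: vec_eq_iff)
qed

end


context hsetup begin

lemma lichL:
  assumes w: "w \<in> U"
  shows "lich_christ h k (Inl i) l w = (1/2) * (\<Sum>q\<in>UNIV. Hi w $ q $ k *
           (wirt (Inl i) (\<lambda>w. h w $ l $ q) w + wirt (Inl l) (\<lambda>w. h w $ i $ q) w))"
  unfolding lich_christ_def LC_christ_def Ginv[OF w]
  by (simp add: sum_UNIV_plus Gi_def bigG_def wirt_const)

lemma lichR:
  assumes w: "w \<in> U"
  shows "lich_christ h k (Inr j) l w = (1/2) * (\<Sum>q\<in>UNIV. Hi w $ q $ k *
           (wirt (Inr j) (\<lambda>w. h w $ l $ q) w - wirt (Inr q) (\<lambda>w. h w $ l $ j) w))"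
  unfolding lich_christ_def LC_christ_def Ginv[OF w]
  by (simp add: sum_UNIV_plus Gi_def bigG_def wirt_const)

lemma chernL: "chern_christ h k (Inl i) l w = (\<Sum>q\<in>UNIV. wirt (Inl i) (\<lambda>w. h w $ l $ q) w * Hi w $ q $ k)"
  by (simp add: chern_christ_def)

lemma chernR: "chern_christ h k (Inr j) l w = 0"
  by (simp add: chern_christ_def)

lemma diff_hh: "z \<in> U \<Longrightarrow> (\<lambda>w. h w $ i $ j) differentiable (at z)"
  using diff_smooth smooth_hh by blast

lemma diff_dh: "z \<in> U \<Longrightarrow> (\<lambda>w. wirt A (\<lambda>w. h w $ i $ j) w) differentiable (at z)"
  using diff_wirt smooth_hh by blast

lemma diff_Hi:
  assumes z: "z \<in> U"
  shows "(\<lambda>w. Hi w $ q $ k) differentiable (at z)"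
proof -
  let ?M = "\<lambda>w. (\<chi> i j. if j = q then axis k 1 $ i else h w $ i $ j) :: complex^'n^'n"
  have "(\<lambda>w. det (?M w)) differentiable (at z)"
  proof (rule diff_det)
    fix i j
    show "(\<lambda>w. ?M w $ i $ j) differentiable (at z)"
      by (cases "j = q") (simp_all add: diff_hh[OF z])
  qed
  moreover have "(\<lambda>w. det (h w)) differentiable (at z)"
    by (rule diff_det) (rule diff_hh[OF z])
  ultimately have "(\<lambda>w. det (?M w) / det (h w)) differentiable (at z)"
    using det_nz[OF z] by (intro differentiable_divide) auto
  then show ?thesis
    by (rule diff_cong_open[OF _ Uopen z]) (simp add: inv_cramer[OF det_nz])
qed

lemma diff_chern:
  assumes z: "z \<in> U"
  shows "(\<lambda>w. chern_christ h k A l w) differentiable (at z)"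
proof (cases A)
  case (Inl i)
  show ?thesis unfolding Inl chernL
    by (intro differentiable_sum ballI differentiable_mult diff_dh[OF z] diff_Hi[OF z]) auto
next
  case (Inr j)
  show ?thesis unfolding Inr chernR by simp
qed

lemma diff_lich:
  assumes z: "z \<in> U"
  shows "(\<lambda>w. lich_christ h k A l w) differentiable (at z)"
proof (cases A)
  case (Inl i)
  have "(\<lambda>w. (1/2) * (\<Sum>q\<in>UNIV. Hi w $ q $ k *
           (wirt (Inl i) (\<lambda>w. h w $ l $ q) w + wirt (Inl l) (\<lambda>w. h w $ i $ q) w))) differentiable (at z)"
    by (intro differentiable_sum ballI differentiable_mult differentiable_add differentiable_const diff_dh[OF z] diff_Hi[OF z]) auto
  then show ?thesis unfolding Inl
    by (rule diff_cong_open[OF _ Uopen z]) (simp add: lichL)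
next
  case (Inr j)
  have "(\<lambda>w. (1/2) * (\<Sum>q\<in>UNIV. Hi w $ q $ k *
           (wirt (Inr j) (\<lambda>w. h w $ l $ q) w - wirt (Inr q) (\<lambda>w. h w $ l $ j) w))) differentiable (at z)"
    by (intro differentiable_sum ballI differentiable_mult differentiable_diff differentiable_const diff_dh[OF z] diff_Hi[OF z]) auto
  then show ?thesis unfolding Inr
    by (rule diff_cong_open[OF _ Uopen z]) (simp add: lichR)
qed

end


lemma reorder5:
  fixes f :: "'a \<Rightarrow> 'b \<Rightarrow> 'c \<Rightarrow> 'd \<Rightarrow> 'e \<Rightarrow> 'r::comm_monoid_add"
  shows "(\<Sum>k\<in>K. \<Sum>m\<in>M. \<Sum>i\<in>I. \<Sum>j\<in>J. \<Sum>l\<in>L. f k m i j l)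
  = (\<Sum>i\<in>I. \<Sum>j\<in>J. \<Sum>l\<in>L. \<Sum>m\<in>M. \<Sum>k\<in>K. f k m i j l)"
proof -
  have "(\<Sum>k\<in>K. \<Sum>m\<in>M. \<Sum>i\<in>I. \<Sum>j\<in>J. \<Sum>l\<in>L. f k m i j l)
      = (\<Sum>m\<in>M. \<Sum>k\<in>K. \<Sum>i\<in>I. \<Sum>j\<in>J. \<Sum>l\<in>L. f k m i j l)" by (rule sum.swap)
  also have "\<dots> = (\<Sum>m\<in>M. \<Sum>i\<in>I. \<Sum>k\<in>K. \<Sum>j\<in>J. \<Sum>l\<in>L. f k m i j l)"
    by (rule sum.cong[OF refl], rule sum.swap)
  also have "\<dots> = (\<Sum>m\<in>M. \<Sum>i\<in>I. \<Sum>j\<in>J. \<Sum>k\<in>K. \<Sum>l\<in>L. f k m i j l)"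
    by (rule sum.cong[OF refl], rule sum.cong[OF refl], rule sum.swap)
  also have "\<dots> = (\<Sum>m\<in>M. \<Sum>i\<in>I. \<Sum>j\<in>J. \<Sum>l\<in>L. \<Sum>k\<in>K. f k m i j l)"
    by (rule sum.cong[OF refl], rule sum.cong[OF refl], rule sum.cong[OF refl], rule sum.swap)
  also have "\<dots> = (\<Sum>i\<in>I. \<Sum>m\<in>M. \<Sum>j\<in>J. \<Sum>l\<in>L. \<Sum>k\<in>K. f k m i j l)" by (rule sum.swap)
  also have "\<dots> = (\<Sum>i\<in>I. \<Sum>j\<in>J. \<Sum>m\<in>M. \<Sum>l\<in>L. \<Sum>k\<in>K. f k m i j l)"
    by (rule sum.cong[OF refl], rule sum.swap)
  also have "\<dots> = (\<Sum>i\<in>I. \<Sum>j\<in>J. \<Sum>l\<in>L. \<Sum>m\<in>M. \<Sum>k\<in>K. f k m i j l)"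
    by (rule sum.cong[OF refl], rule sum.cong[OF refl], rule sum.swap)
  finally show ?thesis .
qed

lemma reorder3:
  shows "(\<Sum>i\<in>I. \<Sum>j\<in>J. \<Sum>l\<in>L. f i j l) = (\<Sum>l\<in>L. \<Sum>j\<in>J. \<Sum>i\<in>I. f i j l)"
proof -
  have "(\<Sum>i\<in>I. \<Sum>j\<in>J. \<Sum>l\<in>L. f i j l) = (\<Sum>j\<in>J. \<Sum>i\<in>I. \<Sum>l\<in>L. f i j l)" by (rule sum.swap)
  also have "\<dots> = (\<Sum>j\<in>J. \<Sum>l\<in>L. \<Sum>i\<in>I. f i j l)" by (rule sum.cong[OF refl], rule sum.swap)
  also have "\<dots> = (\<Sum>l\<in>L. \<Sum>j\<in>J. \<Sum>i\<in>I. f i j l)" by (rule sum.swap)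
  finally show ?thesis .
qed

lemma anti3:
  fixes f :: "'a \<Rightarrow> 'b \<Rightarrow> 'a \<Rightarrow> complex"
  assumes "\<And>i j l. f i j l = - f l j i"
  shows "(\<Sum>i\<in>A. \<Sum>j\<in>B. \<Sum>l\<in>A. f i j l) = 0"
proof -
  let ?S = "(\<Sum>i\<in>A. \<Sum>j\<in>B. \<Sum>l\<in>A. f i j l)"
  have "?S = (\<Sum>l\<in>A. \<Sum>j\<in>B. \<Sum>i\<in>A. f i j l)" by (rule reorder3)
  also have "\<dots> = (\<Sum>l\<in>A. \<Sum>j\<in>B. \<Sum>i\<in>A. - f l j i)"
    by (rule sum.cong[OF refl])+ (rule assms)
  also have "\<dots> = - ?S" by (simp add: sum_negf)
  finally show ?thesis by simp
qed

lemma anti4: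
  fixes f :: "'i \<Rightarrow> 'a \<Rightarrow> 'b \<Rightarrow> 'a \<Rightarrow> complex"
  assumes "\<And>i j l m. f i j l m = - f i m l j"
  shows "(\<Sum>i\<in>I. \<Sum>j\<in>A. \<Sum>l\<in>B. \<Sum>m\<in>A. f i j l m) = 0"
proof -
  have "\<And>i. (\<Sum>j\<in>A. \<Sum>l\<in>B. \<Sum>m\<in>A. f i j l m) = 0"
    by (rule anti3) (rule assms)
  then show ?thesis by simp
qed

context hsetup begin

definition ctr :: "complex^'n \<Rightarrow> complex^'n \<Rightarrow> ('n \<Rightarrow> 'n \<Rightarrow> 'n \<Rightarrow> 'n \<Rightarrow> complex) \<Rightarrow> complex" where
  "ctr z v F = (\<Sum>k\<in>UNIV. \<Sum>m\<in>UNIV. (\<Sum>i\<in>UNIV. \<Sum>j\<in>UNIV. \<Sum>l\<in>UNIV. v $ i * cnj (v $ j) * v $ l * F k i j l)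
               * cnj (v $ m) * h z $ k $ m)"

lemma HSC_ctr: "gaud_HSC t h z v = ctr z v (\<lambda>k i j l. gaud_curv t h k (Inl i) (Inr j) l z)
     / (\<Sum>i\<in>UNIV. \<Sum>j\<in>UNIV. v $ i * cnj (v $ j) * h z $ i $ j) ^ 2"
  by (simp add: gaud_HSC_def ctr_def)

lemma ctr_add: "ctr z v (\<lambda>k i j l. F k i j l + G k i j l) = ctr z v F + ctr z v G"
  by (simp add: ctr_def distrib_left distrib_right sum.distrib)

lemma ctr_diff: "ctr z v (\<lambda>k i j l. F k i j l - G k i j l) = ctr z v F - ctr z v G"
  by (simp add: ctr_def right_diff_distrib left_diff_distrib sum_subtractf)

lemma ctr_cmult: "ctr z v (\<lambda>k i j l. c * F k i j l) = c * ctr z v F"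
proof -
  have "ctr z v (\<lambda>k i j l. c * F k i j l) = (\<Sum>k\<in>UNIV. \<Sum>m\<in>UNIV. c * ((\<Sum>i\<in>UNIV. \<Sum>j\<in>UNIV. \<Sum>l\<in>UNIV. v $ i * cnj (v $ j) * v $ l * F k i j l)
               * cnj (v $ m) * h z $ k $ m))"
    unfolding ctr_def by (simp add: sum_distrib_left mult_ac)
  then show ?thesis by (simp add: ctr_def sum_distrib_left)
qed

lemma ctr_lower: "ctr z v F = (\<Sum>i\<in>UNIV. \<Sum>j\<in>UNIV. \<Sum>l\<in>UNIV. \<Sum>m\<in>UNIV.
    v $ i * cnj (v $ j) * v $ l * cnj (v $ m) * (\<Sum>k\<in>UNIV. F k i j l * h z $ k $ m))"
proof -
  have "ctr z v F = (\<Sum>k\<in>UNIV. \<Sum>m\<in>UNIV. \<Sum>i\<in>UNIV. \<Sum>j\<in>UNIV. \<Sum>l\<in>UNIV.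
      v $ i * cnj (v $ j) * v $ l * cnj (v $ m) * (F k i j l * h z $ k $ m))"
    unfolding ctr_def by (simp add: sum_distrib_left sum_distrib_right mult_ac)
  also have "\<dots> = (\<Sum>i\<in>UNIV. \<Sum>j\<in>UNIV. \<Sum>l\<in>UNIV. \<Sum>m\<in>UNIV. \<Sum>k\<in>UNIV.
      v $ i * cnj (v $ j) * v $ l * cnj (v $ m) * (F k i j l * h z $ k $ m))"
    by (rule reorder5)
  also have "\<dots> = (\<Sum>i\<in>UNIV. \<Sum>j\<in>UNIV. \<Sum>l\<in>UNIV. \<Sum>m\<in>UNIV.
    v $ i * cnj (v $ j) * v $ l * cnj (v $ m) * (\<Sum>k\<in>UNIV. F k i j l * h z $ k $ m))"
    by (simp add: sum_distrib_left)
  finally show ?thesis .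
qed

lemma ctr_anti_il:
  assumes "\<And>k i j l. X k i j l = - X k l j i"
  shows "ctr z v X = 0"
proof -
  have "\<And>k. (\<Sum>i\<in>UNIV. \<Sum>j\<in>UNIV. \<Sum>l\<in>UNIV. v $ i * cnj (v $ j) * v $ l * X k i j l) = 0"
  proof (rule anti3)
    fix k i j l
    show "v $ i * cnj (v $ j) * v $ l * X k i j l = - (v $ l * cnj (v $ j) * v $ i * X k l j i)"
      using assms[of k i j l] by (simp add: mult_ac)
  qed
  then show ?thesis by (simp add: ctr_def)
qed

lemma ctr_anti_jm:
  assumes "\<And>i j l m. (\<Sum>k\<in>UNIV. X k i j l * h z $ k $ m) = - (\<Sum>k\<in>UNIV. X k i m l * h z $ k $ j)"
  shows "ctr z v X = 0"
  unfolding ctr_lower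
proof (rule anti4)
  fix i j l m
  show "v $ i * cnj (v $ j) * v $ l * cnj (v $ m) * (\<Sum>k\<in>UNIV. X k i j l * h z $ k $ m) =
    - (v $ i * cnj (v $ m) * v $ l * cnj (v $ j) * (\<Sum>k\<in>UNIV. X k i m l * h z $ k $ j))"
    using assms[of i j l m] by (simp add: mult_ac)
qed

end


context hsetup begin

definition ee where "ee k A l w = lich_christ h k A l w - chern_christ h k A l w"

lemma diff_ee: "z \<in> U \<Longrightarrow> (\<lambda>w. ee k A l w) differentiable (at z)"
  unfolding ee_def by (intro differentiable_diff diff_lich diff_chern)

lemma eeL:
  assumes w: "w \<in> U"
  shows "ee k (Inl i) l w = (1/2) * (\<Sum>q\<in>UNIV. Hi w $ q $ k *
           (wirt (Inl l) (\<lambda>w. h w $ i $ q) w - wirt (Inl i) (\<lambda>w. h w $ l $ q) w))"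
proof -
  have "ee k (Inl i) l w = (\<Sum>q\<in>UNIV. (1/2) * (Hi w $ q $ k *
           (wirt (Inl i) (\<lambda>w. h w $ l $ q) w + wirt (Inl l) (\<lambda>w. h w $ i $ q) w))
           - wirt (Inl i) (\<lambda>w. h w $ l $ q) w * Hi w $ q $ k)"
    by (simp add: ee_def lichL[OF w] chernL sum_distrib_left sum_subtractf)
  also have "\<dots> = (\<Sum>q\<in>UNIV. (1/2) * (Hi w $ q $ k *
           (wirt (Inl l) (\<lambda>w. h w $ i $ q) w - wirt (Inl i) (\<lambda>w. h w $ l $ q) w)))"
    by (rule sum.cong) (auto simp: algebra_simps)
  also have "\<dots> = (1/2) * (\<Sum>q\<in>UNIV. Hi w $ q $ k *
           (wirt (Inl l) (\<lambda>w. h w $ i $ q) w - wirt (Inl i) (\<lambda>w. h w $ l $ q) w))"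
    by (simp add: sum_distrib_left)
  finally show ?thesis .
qed

lemma eeR:
  assumes w: "w \<in> U"
  shows "ee k (Inr j) l w = (1/2) * (\<Sum>q\<in>UNIV. Hi w $ q $ k *
           (wirt (Inr j) (\<lambda>w. h w $ l $ q) w - wirt (Inr q) (\<lambda>w. h w $ l $ j) w))"
  by (simp add: ee_def lichR[OF w] chernR)

lemma ee_anti:
  assumes w: "w \<in> U"
  shows "ee k (Inl i) l w = - ee k (Inl l) i w"
proof -
  have "(\<Sum>q\<in>UNIV. Hi w $ q $ k *
           (wirt (Inl l) (\<lambda>w. h w $ i $ q) w - wirt (Inl i) (\<lambda>w. h w $ l $ q) w))
      = (\<Sum>q\<in>UNIV. - (Hi w $ q $ k *
           (wirt (Inl i) (\<lambda>w. h w $ l $ q) w - wirt (Inl l) (\<lambda>w. h w $ i $ q) w)))"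
    by (rule sum.cong) (auto simp: algebra_simps)
  then show ?thesis by (simp add: eeL[OF w] sum_negf)
qed

lemma dee_anti:
  assumes z: "z \<in> U"
  shows "wirt B (\<lambda>w. ee k (Inl i) l w) z = - wirt B (\<lambda>w. ee k (Inl l) i w) z"
proof -
  have "wirt B (\<lambda>w. ee k (Inl i) l w) z = wirt B (\<lambda>w. (-1) * ee k (Inl l) i w) z"
  proof (rule wirt_cong_open[OF Uopen z])
    fix y assume y: "y \<in> U"
    show "ee k (Inl i) l y = (-1) * ee k (Inl l) i y" using ee_anti[OF y, of k i l] by simp
  qed
  also have "\<dots> = (-1) * wirt B (\<lambda>w. ee k (Inl l) i w) z"
    by (rule wirt_cmult) (rule diff_ee[OF z])
  finally show ?thesis by simp
qed

lemma dHi_lower: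
  assumes z: "z \<in> U"
  shows "(\<Sum>k\<in>UNIV. wirt A (\<lambda>w. Hi w $ q $ k) z * h z $ k $ m)
       = - (\<Sum>k\<in>UNIV. Hi z $ q $ k * wirt A (\<lambda>w. h w $ k $ m) z)"
proof -
  have "wirt A (\<lambda>w. \<Sum>k\<in>UNIV. Hi w $ q $ k * h w $ k $ m) z = wirt A (\<lambda>w. if q = m then 1 else 0) z"
    by (rule wirt_cong_open[OF Uopen z]) (simp add: HiL)
  also have "\<dots> = 0" by (rule wirt_const)
  finally have 0: "wirt A (\<lambda>w. \<Sum>k\<in>UNIV. Hi w $ q $ k * h w $ k $ m) z = 0" .
  have "wirt A (\<lambda>w. \<Sum>k\<in>UNIV. Hi w $ q $ k * h w $ k $ m) z
     = (\<Sum>k\<in>UNIV. wirt A (\<lambda>w. Hi w $ q $ k * h w $ k $ m) z)"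
    by (rule wirt_sum) (auto intro!: differentiable_mult diff_Hi[OF z] diff_hh[OF z])
  also have "\<dots> = (\<Sum>k\<in>UNIV. Hi z $ q $ k * wirt A (\<lambda>w. h w $ k $ m) z + wirt A (\<lambda>w. Hi w $ q $ k) z * h z $ k $ m)"
    by (rule sum.cong[OF refl], rule wirt_mult) (auto intro!: diff_Hi[OF z] diff_hh[OF z])
  finally show ?thesis using 0 by (simp add: sum.distrib eq_neg_iff_add_eq_0 add.commute)
qed

lemma dh_cnj:
  assumes z: "z \<in> U"
  shows "wirt (Inr j) (\<lambda>w. h w $ l $ q) z = cnj (wirt (Inl j) (\<lambda>w. h w $ q $ l) z)"
proof -
  have "wirt (Inr j) (\<lambda>w. h w $ l $ q) z = wirt (Inr j) (\<lambda>w. cnj (h w $ q $ l)) z"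
  proof (rule wirt_cong_open[OF Uopen z])
    fix y assume y: "y \<in> U"
    show "h y $ l $ q = cnj (h y $ q $ l)" by (rule herm[OF y])
  qed
  also have "\<dots> = cnj (wirt (Inl j) (\<lambda>w. h w $ q $ l) z)"
    by (rule wirt_cnj) (rule diff_hh[OF z])
  finally show ?thesis .
qed

lemma gaud_eq: "gaud_christ t h k A l = (\<lambda>w. chern_christ h k A l w + complex_of_real (1 - t) * ee k A l w)"
  by (rule ext) (simp add: gaud_christ_def ee_def algebra_simps)

definition C0 where "C0 k A B l z = wirt A (\<lambda>w. chern_christ h k B l w) z - wirt B (\<lambda>w. chern_christ h k A l w) z
   + (\<Sum>m\<in>UNIV. chern_christ h m B l z * chern_christ h k A m z - chern_christ h m A l z * chern_christ h k B m z)"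
definition C1 where "C1 k A B l z = wirt A (\<lambda>w. ee k B l w) z - wirt B (\<lambda>w. ee k A l w) z
   + (\<Sum>m\<in>UNIV. chern_christ h m B l z * ee k A m z + ee m B l z * chern_christ h k A m z
                - chern_christ h m A l z * ee k B m z - ee m A l z * chern_christ h k B m z)"
definition C2 where "C2 k A B l z = (\<Sum>m\<in>UNIV. ee m B l z * ee k A m z - ee m A l z * ee k B m z)"

lemma curv_dec:
  assumes z: "z \<in> U"
  shows "gaud_curv t h k A B l z = C0 k A B l z + complex_of_real (1 - t) * C1 k A B l z
           + (complex_of_real (1 - t))^2 * C2 k A B l z"
proof -
  define u where "u = complex_of_real (1 - t)"
  have dw: "wirt X (gaud_christ t h k' Y l') z = wirt X (\<lambda>w. chern_christ h k' Y l' w) z + u * wirt X (\<lambda>w. ee k' Y l' w) z"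
    for X Y k' l'
  proof -
    have "wirt X (gaud_christ t h k' Y l') z = wirt X (\<lambda>w. chern_christ h k' Y l' w + u * ee k' Y l' w) z"
      by (simp add: gaud_eq u_def)
    also have "\<dots> = wirt X (\<lambda>w. chern_christ h k' Y l' w) z + wirt X (\<lambda>w. u * ee k' Y l' w) z"
      by (rule wirt_add) (auto intro!: diff_chern[OF z] differentiable_mult diff_ee[OF z])
    also have "\<dots> = wirt X (\<lambda>w. chern_christ h k' Y l' w) z + u * wirt X (\<lambda>w. ee k' Y l' w) z"
      by (simp add: wirt_cmult diff_ee[OF z])
    finally show ?thesis .
  qed
  have gv: "gaud_christ t h k' Y l' z = chern_christ h k' Y l' z + u * ee k' Y l' z" for k' Y l'
    by (simp add: gaud_eq u_def)
  let ?c = "\<lambda>k A l. chern_christ h k A l z" and ?e = "\<lambda>k A l. ee k A l z"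
  have S: "(\<Sum>m\<in>UNIV. (?c m B l + u * ?e m B l) * (?c k A m + u * ?e k A m)
                 - (?c m A l + u * ?e m A l) * (?c k B m + u * ?e k B m))
     = (\<Sum>m\<in>UNIV. ?c m B l * ?c k A m - ?c m A l * ?c k B m)
       + u * (\<Sum>m\<in>UNIV. ?c m B l * ?e k A m + ?e m B l * ?c k A m - ?c m A l * ?e k B m - ?e m A l * ?c k B m)
       + u^2 * (\<Sum>m\<in>UNIV. ?e m B l * ?e k A m - ?e m A l * ?e k B m)" (is "?L = ?R")
  proof -
    have "(\<Sum>m\<in>UNIV. (?c m B l + u * ?e m B l) * (?c k A m + u * ?e k A m)
                 - (?c m A l + u * ?e m A l) * (?c k B m + u * ?e k B m))
      = (\<Sum>m\<in>UNIV. (?c m B l * ?c k A m - ?c m A l * ?c k B m)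
       + u * (?c m B l * ?e k A m + ?e m B l * ?c k A m - ?c m A l * ?e k B m - ?e m A l * ?c k B m)
       + u^2 * (?e m B l * ?e k A m - ?e m A l * ?e k B m))"
      by (rule sum.cong[OF refl]) (simp add: algebra_simps power2_eq_square)
    also have "\<dots> = ?R" by (simp only: sum.distrib sum_distrib_left)
    finally show ?thesis .
  qed
  show ?thesis
    unfolding gaud_curv_def dw gv C0_def C1_def C2_def u_def[symmetric] S
    by (simp add: algebra_simps)
qed

end


context hsetup begin

abbreviation dh where "dh A a b w \<equiv> wirt A (\<lambda>w. h w $ a $ b) w"

definition Sx where "Sx w j l q = dh (Inr j) l q w - dh (Inr q) l j w"

lemma diff_Sx: "z \<in> U \<Longrightarrow> (\<lambda>w. Sx w j l q) differentiable (at z)"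
  unfolding Sx_def by (intro differentiable_diff diff_dh)

lemma Sx_anti: "Sx w m p j = - Sx w j p m"
  by (simp add: Sx_def)

lemma lower_eeR:
  assumes z: "z \<in> U"
  shows "(\<Sum>k\<in>UNIV. ee k (Inr j) p z * h z $ k $ m) = (1/2) * Sx z j p m"
proof -
  have "(\<Sum>k\<in>UNIV. ee k (Inr j) p z * h z $ k $ m)
      = (\<Sum>k\<in>UNIV. \<Sum>q\<in>UNIV. (1/2) * Sx z j p q * (Hi z $ q $ k * h z $ k $ m))"
    by (simp add: eeR[OF z] Sx_def sum_distrib_left sum_distrib_right mult_ac)
  also have "\<dots> = (\<Sum>q\<in>UNIV. \<Sum>k\<in>UNIV. (1/2) * Sx z j p q * (Hi z $ q $ k * h z $ k $ m))"
    by (rule sum.swap)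
  also have "\<dots> = (\<Sum>q\<in>UNIV. (1/2) * Sx z j p q * (\<Sum>k\<in>UNIV. Hi z $ q $ k * h z $ k $ m))"
    by (simp add: sum_distrib_left)
  also have "\<dots> = (1/2) * Sx z j p m"
    by (simp only: HiL[OF z] sum_delta_mult)
  finally show ?thesis .
qed

lemma lower_chern:
  assumes z: "z \<in> U"
  shows "(\<Sum>k\<in>UNIV. chern_christ h k (Inl i) p z * h z $ k $ m) = dh (Inl i) p m z"
proof -
  have "(\<Sum>k\<in>UNIV. chern_christ h k (Inl i) p z * h z $ k $ m)
      = (\<Sum>k\<in>UNIV. \<Sum>q\<in>UNIV. dh (Inl i) p q z * (Hi z $ q $ k * h z $ k $ m))"
    by (simp add: chernL sum_distrib_left sum_distrib_right mult_ac)
  also have "\<dots> = (\<Sum>q\<in>UNIV. \<Sum>k\<in>UNIV. dh (Inl i) p q z * (Hi z $ q $ k * h z $ k $ m))"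
    by (rule sum.swap)
  also have "\<dots> = (\<Sum>q\<in>UNIV. dh (Inl i) p q z * (\<Sum>k\<in>UNIV. Hi z $ q $ k * h z $ k $ m))"
    by (simp add: sum_distrib_left)
  also have "\<dots> = dh (Inl i) p m z"
    by (simp only: HiL[OF z] sum_delta_mult)
  finally show ?thesis .
qed

lemma lower_eeL:
  assumes z: "z \<in> U"
  shows "(\<Sum>k\<in>UNIV. ee k (Inl i) p z * h z $ k $ m) = (1/2) * (dh (Inl p) i m z - dh (Inl i) p m z)"
proof -
  have "(\<Sum>k\<in>UNIV. ee k (Inl i) p z * h z $ k $ m)
      = (\<Sum>k\<in>UNIV. \<Sum>q\<in>UNIV. (1/2) * (dh (Inl p) i q z - dh (Inl i) p q z) * (Hi z $ q $ k * h z $ k $ m))"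
    by (simp add: eeL[OF z] sum_distrib_left sum_distrib_right mult_ac)
  also have "\<dots> = (\<Sum>q\<in>UNIV. \<Sum>k\<in>UNIV. (1/2) * (dh (Inl p) i q z - dh (Inl i) p q z) * (Hi z $ q $ k * h z $ k $ m))"
    by (rule sum.swap)
  also have "\<dots> = (\<Sum>q\<in>UNIV. (1/2) * (dh (Inl p) i q z - dh (Inl i) p q z) * (\<Sum>k\<in>UNIV. Hi z $ q $ k * h z $ k $ m))"
    by (simp add: sum_distrib_left)
  also have "\<dots> = (1/2) * (dh (Inl p) i m z - dh (Inl i) p m z)"
    by (simp only: HiL[OF z] sum_delta_mult)
  finally show ?thesis .
qed

lemma dee_R_expand:
  assumes z: "z \<in> U"
  shows "wirt (Inl i) (\<lambda>w. ee k (Inr j) l w) z = (1/2) * (\<Sum>q\<in>UNIV.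
     Hi z $ q $ k * wirt (Inl i) (\<lambda>w. Sx w j l q) z + wirt (Inl i) (\<lambda>w. Hi w $ q $ k) z * Sx z j l q)"
proof -
  have d: "(\<lambda>w. Hi w $ q $ k * Sx w j l q) differentiable (at z)" for q
    by (intro differentiable_mult diff_Hi[OF z] diff_Sx[OF z])
  have "wirt (Inl i) (\<lambda>w. ee k (Inr j) l w) z = wirt (Inl i) (\<lambda>w. (1/2) * (\<Sum>q\<in>UNIV. Hi w $ q $ k * Sx w j l q)) z"
    by (rule wirt_cong_open[OF Uopen z]) (simp add: eeR Sx_def)
  also have "\<dots> = (1/2) * wirt (Inl i) (\<lambda>w. \<Sum>q\<in>UNIV. Hi w $ q $ k * Sx w j l q) z"
    by (rule wirt_cmult) (intro differentiable_sum ballI d finite)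
  also have "\<dots> = (1/2) * (\<Sum>q\<in>UNIV. wirt (Inl i) (\<lambda>w. Hi w $ q $ k * Sx w j l q) z)"
    by (subst wirt_sum) (auto intro: d)
  also have "\<dots> = (1/2) * (\<Sum>q\<in>UNIV.
     Hi z $ q $ k * wirt (Inl i) (\<lambda>w. Sx w j l q) z + wirt (Inl i) (\<lambda>w. Hi w $ q $ k) z * Sx z j l q)"
    by (subst wirt_mult) (auto intro: diff_Hi[OF z] diff_Sx[OF z])
  finally show ?thesis .
qed

lemma lower_dee_R:
  assumes z: "z \<in> U"
  shows "(\<Sum>k\<in>UNIV. wirt (Inl i) (\<lambda>w. ee k (Inr j) l w) z * h z $ k $ m)
     = (1/2) * wirt (Inl i) (\<lambda>w. Sx w j l m) z
       - (1/2) * (\<Sum>q\<in>UNIV. Sx z j l q * (\<Sum>k\<in>UNIV. Hi z $ q $ k * dh (Inl i) k m z))"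
proof -
  let ?W = "\<lambda>q. wirt (Inl i) (\<lambda>w. Sx w j l q) z"
  have "(\<Sum>k\<in>UNIV. wirt (Inl i) (\<lambda>w. ee k (Inr j) l w) z * h z $ k $ m)
     = (\<Sum>k\<in>UNIV. \<Sum>q\<in>UNIV. (1/2) * (?W q * (Hi z $ q $ k * h z $ k $ m))
          + (1/2) * (Sx z j l q * (wirt (Inl i) (\<lambda>w. Hi w $ q $ k) z * h z $ k $ m)))"
    by (simp add: dee_R_expand[OF z] sum_distrib_left sum_distrib_right algebra_simps)
  also have "\<dots> = (\<Sum>q\<in>UNIV. \<Sum>k\<in>UNIV. (1/2) * (?W q * (Hi z $ q $ k * h z $ k $ m))
          + (1/2) * (Sx z j l q * (wirt (Inl i) (\<lambda>w. Hi w $ q $ k) z * h z $ k $ m)))"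
    by (rule sum.swap)
  also have "\<dots> = (\<Sum>q\<in>UNIV. (1/2) * (?W q * (\<Sum>k\<in>UNIV. Hi z $ q $ k * h z $ k $ m))
          + (1/2) * (Sx z j l q * (\<Sum>k\<in>UNIV. wirt (Inl i) (\<lambda>w. Hi w $ q $ k) z * h z $ k $ m)))"
    by (simp only: sum.distrib sum_distrib_left)
  also have "\<dots> = (\<Sum>q\<in>UNIV. (1/2) * (?W q * (if q = m then 1 else 0))
          + (1/2) * (Sx z j l q * - (\<Sum>k\<in>UNIV. Hi z $ q $ k * dh (Inl i) k m z)))"
    by (simp only: HiL[OF z] dHi_lower[OF z])
  also have "\<dots> = (1/2) * (\<Sum>q\<in>UNIV. ?W q * (if q = m then 1 else 0))
          - (1/2) * (\<Sum>q\<in>UNIV. Sx z j l q * (\<Sum>k\<in>UNIV. Hi z $ q $ k * dh (Inl i) k m z))"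
    by (simp add: sum.distrib sum_subtractf sum_distrib_left sum_negf)
  also have "\<dots> = (1/2) * ?W m
          - (1/2) * (\<Sum>q\<in>UNIV. Sx z j l q * (\<Sum>k\<in>UNIV. Hi z $ q $ k * dh (Inl i) k m z))"
    by (simp only: sum_delta_mult)
  finally show ?thesis .
qed

end


context hsetup begin

definition Yf where "Yf z k i j l = wirt (Inl i) (\<lambda>w. ee k (Inr j) l w) z
   + (\<Sum>m\<in>UNIV. ee m (Inr j) l z * chern_christ h k (Inl i) m z)
   - (\<Sum>m\<in>UNIV. chern_christ h m (Inl i) l z * ee k (Inr j) m z)"

lemma lowY:
  assumes z: "z \<in> U"
  shows "(\<Sum>k\<in>UNIV. Yf z k i j l * h z $ k $ m)
    = (1/2) * wirt (Inl i) (\<lambda>w. Sx w j l m) z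
      - (1/2) * (\<Sum>p\<in>UNIV. chern_christ h p (Inl i) l z * Sx z j p m)"
proof -
  have tb: "(\<Sum>k\<in>UNIV. (\<Sum>p\<in>UNIV. ee p (Inr j) l z * chern_christ h k (Inl i) p z) * h z $ k $ m)
      = (1/2) * (\<Sum>q\<in>UNIV. Sx z j l q * (\<Sum>k\<in>UNIV. Hi z $ q $ k * dh (Inl i) k m z))"
  proof -
    have "(\<Sum>k\<in>UNIV. (\<Sum>p\<in>UNIV. ee p (Inr j) l z * chern_christ h k (Inl i) p z) * h z $ k $ m)
       = (\<Sum>k\<in>UNIV. \<Sum>p\<in>UNIV. ee p (Inr j) l z * (chern_christ h k (Inl i) p z * h z $ k $ m))"
      by (simp add: sum_distrib_left sum_distrib_right mult_ac)
    also have "\<dots> = (\<Sum>p\<in>UNIV. \<Sum>k\<in>UNIV. ee p (Inr j) l z * (chern_christ h k (Inl i) p z * h z $ k $ m))"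
      by (rule sum.swap)
    also have "\<dots> = (\<Sum>p\<in>UNIV. ee p (Inr j) l z * dh (Inl i) p m z)"
      by (simp add: sum_distrib_left[symmetric] lower_chern[OF z])
    also have "\<dots> = (\<Sum>p\<in>UNIV. \<Sum>q\<in>UNIV. (1/2) * (Sx z j l q * (Hi z $ q $ p * dh (Inl i) p m z)))"
      by (simp add: eeR[OF z] Sx_def sum_distrib_left sum_distrib_right mult_ac)
    also have "\<dots> = (\<Sum>q\<in>UNIV. \<Sum>p\<in>UNIV. (1/2) * (Sx z j l q * (Hi z $ q $ p * dh (Inl i) p m z)))"
      by (rule sum.swap)
    also have "\<dots> = (1/2) * (\<Sum>q\<in>UNIV. Sx z j l q * (\<Sum>k\<in>UNIV. Hi z $ q $ k * dh (Inl i) k m z))"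
      by (simp add: sum_distrib_left)
    finally show ?thesis .
  qed
  have tc: "(\<Sum>k\<in>UNIV. (\<Sum>p\<in>UNIV. chern_christ h p (Inl i) l z * ee k (Inr j) p z) * h z $ k $ m)
      = (1/2) * (\<Sum>p\<in>UNIV. chern_christ h p (Inl i) l z * Sx z j p m)"
  proof -
    have "(\<Sum>k\<in>UNIV. (\<Sum>p\<in>UNIV. chern_christ h p (Inl i) l z * ee k (Inr j) p z) * h z $ k $ m)
       = (\<Sum>k\<in>UNIV. \<Sum>p\<in>UNIV. chern_christ h p (Inl i) l z * (ee k (Inr j) p z * h z $ k $ m))"
      by (simp add: sum_distrib_left sum_distrib_right mult_ac)
    also have "\<dots> = (\<Sum>p\<in>UNIV. \<Sum>k\<in>UNIV. chern_christ h p (Inl i) l z * (ee k (Inr j) p z * h z $ k $ m))"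
      by (rule sum.swap)
    also have "\<dots> = (\<Sum>p\<in>UNIV. chern_christ h p (Inl i) l z * ((1/2) * Sx z j p m))"
      by (simp add: sum_distrib_left[symmetric] lower_eeR[OF z])
    also have "\<dots> = (1/2) * (\<Sum>p\<in>UNIV. chern_christ h p (Inl i) l z * Sx z j p m)"
      by (simp add: sum_distrib_left mult_ac)
    finally show ?thesis .
  qed
  have "(\<Sum>k\<in>UNIV. Yf z k i j l * h z $ k $ m)
     = (\<Sum>k\<in>UNIV. wirt (Inl i) (\<lambda>w. ee k (Inr j) l w) z * h z $ k $ m)
     + (\<Sum>k\<in>UNIV. (\<Sum>p\<in>UNIV. ee p (Inr j) l z * chern_christ h k (Inl i) p z) * h z $ k $ m)
     - (\<Sum>k\<in>UNIV. (\<Sum>p\<in>UNIV. chern_christ h p (Inl i) l z * ee k (Inr j) p z) * h z $ k $ m)"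
    by (simp add: Yf_def algebra_simps sum.distrib sum_subtractf)
  also have "\<dots> = (1/2) * wirt (Inl i) (\<lambda>w. Sx w j l m) z
      - (1/2) * (\<Sum>p\<in>UNIV. chern_christ h p (Inl i) l z * Sx z j p m)"
    unfolding lower_dee_R[OF z] tb tc by simp
  finally show ?thesis .
qed

lemma ctr_Yf:
  assumes z: "z \<in> U"
  shows "ctr z v (Yf z) = 0"
proof (rule ctr_anti_jm)
  fix i j l m
  have w: "wirt (Inl i) (\<lambda>w. Sx w m l j) z = - wirt (Inl i) (\<lambda>w. Sx w j l m) z"
  proof -
    have "(\<lambda>w. Sx w m l j) = (\<lambda>w. (-1) * Sx w j l m)"
      by (rule ext) (simp add: Sx_def)
    then have "wirt (Inl i) (\<lambda>w. Sx w m l j) z = wirt (Inl i) (\<lambda>w. (-1) * Sx w j l m) z"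
      by simp
    also have "\<dots> = (-1) * wirt (Inl i) (\<lambda>w. Sx w j l m) z"
      by (rule wirt_cmult) (rule diff_Sx[OF z])
    finally show ?thesis by simp
  qed
  show "(\<Sum>k\<in>UNIV. Yf z k i j l * h z $ k $ m) = - (\<Sum>k\<in>UNIV. Yf z k i m l * h z $ k $ j)"
    unfolding lowY[OF z] w by (simp add: Sx_anti[of z m _ j] sum_negf algebra_simps)
qed

lemma ctr_C1:
  assumes z: "z \<in> U"
  shows "ctr z v (\<lambda>k i j l. C1 k (Inl i) (Inr j) l z) = 0"
proof -
  have "(\<lambda>k i j l. C1 k (Inl i) (Inr j) l z) = (\<lambda>k i j l. Yf z k i j l - wirt (Inr j) (\<lambda>w. ee k (Inl i) l w) z)"
    by (intro ext) (simp add: C1_def Yf_def chernR sum_subtractf algebra_simps)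
  then have "ctr z v (\<lambda>k i j l. C1 k (Inl i) (Inr j) l z) = ctr z v (Yf z) - ctr z v (\<lambda>k i j l. wirt (Inr j) (\<lambda>w. ee k (Inl i) l w) z)"
    by (simp add: ctr_diff)
  also have "ctr z v (\<lambda>k i j l. wirt (Inr j) (\<lambda>w. ee k (Inl i) l w) z) = 0"
    by (rule ctr_anti_il) (rule dee_anti[OF z])
  finally show ?thesis using ctr_Yf[OF z] by simp
qed

end


lemma pull2: "(\<Sum>x\<in>X. \<Sum>p\<in>P. \<Sum>q\<in>Q. f x p q) = (\<Sum>p\<in>P. \<Sum>q\<in>Q. \<Sum>x\<in>X. f x p q)"
proof -
  have "(\<Sum>x\<in>X. \<Sum>p\<in>P. \<Sum>q\<in>Q. f x p q) = (\<Sum>p\<in>P. \<Sum>x\<in>X. \<Sum>q\<in>Q. f x p q)" by (rule sum.swap)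
  also have "\<dots> = (\<Sum>p\<in>P. \<Sum>q\<in>Q. \<Sum>x\<in>X. f x p q)" by (rule sum.cong[OF refl], rule sum.swap)
  finally show ?thesis .
qed

lemma pull4:
  "(\<Sum>i\<in>I. \<Sum>j\<in>J. \<Sum>l\<in>L. \<Sum>m\<in>M. \<Sum>p\<in>P. \<Sum>q\<in>Q. f i j l m p q)
   = (\<Sum>p\<in>P. \<Sum>q\<in>Q. \<Sum>i\<in>I. \<Sum>j\<in>J. \<Sum>l\<in>L. \<Sum>m\<in>M. f i j l m p q)"
proof -
  have "(\<Sum>i\<in>I. \<Sum>j\<in>J. \<Sum>l\<in>L. \<Sum>m\<in>M. \<Sum>p\<in>P. \<Sum>q\<in>Q. f i j l m p q)
     = (\<Sum>i\<in>I. \<Sum>j\<in>J. \<Sum>l\<in>L. \<Sum>p\<in>P. \<Sum>q\<in>Q. \<Sum>m\<in>M. f i j l m p q)"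
    by (rule sum.cong[OF refl], rule sum.cong[OF refl], rule sum.cong[OF refl], rule pull2)
  also have "\<dots> = (\<Sum>i\<in>I. \<Sum>j\<in>J. \<Sum>p\<in>P. \<Sum>q\<in>Q. \<Sum>l\<in>L. \<Sum>m\<in>M. f i j l m p q)"
    by (rule sum.cong[OF refl], rule sum.cong[OF refl], rule pull2)
  also have "\<dots> = (\<Sum>i\<in>I. \<Sum>p\<in>P. \<Sum>q\<in>Q. \<Sum>j\<in>J. \<Sum>l\<in>L. \<Sum>m\<in>M. f i j l m p q)"
    by (rule sum.cong[OF refl], rule pull2)
  also have "\<dots> = (\<Sum>p\<in>P. \<Sum>q\<in>Q. \<Sum>i\<in>I. \<Sum>j\<in>J. \<Sum>l\<in>L. \<Sum>m\<in>M. f i j l m p q)"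
    by (rule pull2)
  finally show ?thesis .
qed

lemma factor4:
  fixes c :: complex
  shows "(\<Sum>i\<in>I. \<Sum>j\<in>J. \<Sum>l\<in>L. \<Sum>m\<in>M. c * B j l * A i m)
     = c * (\<Sum>j\<in>J. \<Sum>l\<in>L. B j l) * (\<Sum>i\<in>I. \<Sum>m\<in>M. A i m)"
proof -
  have "(\<Sum>i\<in>I. \<Sum>j\<in>J. \<Sum>l\<in>L. \<Sum>m\<in>M. c * B j l * A i m)
      = (\<Sum>j\<in>J. \<Sum>i\<in>I. \<Sum>l\<in>L. \<Sum>m\<in>M. c * B j l * A i m)" by (rule sum.swap)
  also have "\<dots> = (\<Sum>j\<in>J. \<Sum>l\<in>L. \<Sum>i\<in>I. \<Sum>m\<in>M. c * B j l * A i m)"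
    by (rule sum.cong[OF refl], rule sum.swap)
  also have "\<dots> = (\<Sum>j\<in>J. \<Sum>l\<in>L. c * B j l * (\<Sum>i\<in>I. \<Sum>m\<in>M. A i m))"
    by (simp add: sum_distrib_left mult.assoc)
  also have "\<dots> = c * (\<Sum>j\<in>J. \<Sum>l\<in>L. B j l) * (\<Sum>i\<in>I. \<Sum>m\<in>M. A i m)"
    by (simp only: sum_distrib_right[symmetric] sum_distrib_left[symmetric])
  finally show ?thesis .
qed

context hsetup begin

definition wv where "wv z v p = (\<Sum>i\<in>UNIV. \<Sum>m\<in>UNIV. v $ i * cnj (v $ m) * (dh (Inl i) p m z - dh (Inl p) i m z))"

lemma ctr_C2:
  assumes z: "z \<in> U"
  shows "ctr z v (\<lambda>k i j l. C2 k (Inl i) (Inr j) l z)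
     = - (1/4) * (\<Sum>p\<in>UNIV. \<Sum>q\<in>UNIV. Hi z $ q $ p * cnj (wv z v q) * wv z v p)"
proof -
  let ?Q = "\<lambda>k i j l. \<Sum>p\<in>UNIV. ee p (Inr j) l z * ee k (Inl i) p z"
  let ?R = "\<lambda>k i j l. \<Sum>p\<in>UNIV. ee p (Inl i) l z * ee k (Inr j) p z"
  have "ctr z v (\<lambda>k i j l. C2 k (Inl i) (Inr j) l z) = ctr z v (\<lambda>k i j l. ?Q k i j l - ?R k i j l)"
    by (simp add: C2_def sum_subtractf)
  also have "\<dots> = ctr z v ?Q - ctr z v ?R" by (rule ctr_diff)
  also have "ctr z v ?R = 0"
  proof (rule ctr_anti_il)
    fix k i j l
    show "?R k i j l = - ?R k l j i"
      using ee_anti[OF z, of _ i l] by (simp add: sum_negf[symmetric])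
  qed
  finally have e1: "ctr z v (\<lambda>k i j l. C2 k (Inl i) (Inr j) l z) = ctr z v ?Q" by simp
  let ?F = "\<lambda>i j l m p q. (1/4) * Hi z $ q $ p * (cnj (v $ j) * v $ l * Sx z j l q)
              * (v $ i * cnj (v $ m) * (dh (Inl p) i m z - dh (Inl i) p m z))"
  have lowQ: "(\<Sum>k\<in>UNIV. ?Q k i j l * h z $ k $ m) = (\<Sum>p\<in>UNIV. ee p (Inr j) l z * ((1/2) * (dh (Inl p) i m z - dh (Inl i) p m z)))"
    for i j l m
  proof -
    have "(\<Sum>k\<in>UNIV. ?Q k i j l * h z $ k $ m) = (\<Sum>k\<in>UNIV. \<Sum>p\<in>UNIV. ee p (Inr j) l z * (ee k (Inl i) p z * h z $ k $ m))"
      by (simp add: sum_distrib_left sum_distrib_right mult_ac)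
    also have "\<dots> = (\<Sum>p\<in>UNIV. \<Sum>k\<in>UNIV. ee p (Inr j) l z * (ee k (Inl i) p z * h z $ k $ m))"
      by (rule sum.swap)
    also have "\<dots> = (\<Sum>p\<in>UNIV. ee p (Inr j) l z * ((1/2) * (dh (Inl p) i m z - dh (Inl i) p m z)))"
      by (simp add: sum_distrib_left[symmetric] lower_eeL[OF z])
    finally show ?thesis .
  qed
  have "ctr z v ?Q = (\<Sum>i\<in>UNIV. \<Sum>j\<in>UNIV. \<Sum>l\<in>UNIV. \<Sum>m\<in>UNIV. \<Sum>p\<in>UNIV. \<Sum>q\<in>UNIV. ?F i j l m p q)"
    unfolding ctr_lower lowQ
    by (intro sum.cong refl) (simp add: eeR[OF z] Sx_def sum_distrib_left sum_distrib_right mult_ac)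
  also have "\<dots> = (\<Sum>p\<in>UNIV. \<Sum>q\<in>UNIV. \<Sum>i\<in>UNIV. \<Sum>j\<in>UNIV. \<Sum>l\<in>UNIV. \<Sum>m\<in>UNIV. ?F i j l m p q)"
    by (rule pull4)
  also have "\<dots> = (\<Sum>p\<in>UNIV. \<Sum>q\<in>UNIV. (1/4) * Hi z $ q $ p
       * (\<Sum>j\<in>UNIV. \<Sum>l\<in>UNIV. cnj (v $ j) * v $ l * Sx z j l q)
       * (\<Sum>i\<in>UNIV. \<Sum>m\<in>UNIV. v $ i * cnj (v $ m) * (dh (Inl p) i m z - dh (Inl i) p m z)))"
    by (rule sum.cong[OF refl], rule sum.cong[OF refl], rule factor4)
  also have "\<dots> = (\<Sum>p\<in>UNIV. \<Sum>q\<in>UNIV. (1/4) * Hi z $ q $ p * cnj (wv z v q) * (- wv z v p))"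
  proof -
    have a: "(\<Sum>j\<in>UNIV. \<Sum>l\<in>UNIV. cnj (v $ j) * v $ l * Sx z j l q) = cnj (wv z v q)" for q
      by (simp add: wv_def Sx_def dh_cnj[OF z] algebra_simps)
    have b: "(\<Sum>i\<in>UNIV. \<Sum>m\<in>UNIV. v $ i * cnj (v $ m) * (dh (Inl p) i m z - dh (Inl i) p m z)) = - wv z v p" for p
      by (simp add: wv_def sum_negf[symmetric] algebra_simps)
    show ?thesis by (simp only: a b)
  qed
  also have "\<dots> = - (1/4) * (\<Sum>p\<in>UNIV. \<Sum>q\<in>UNIV. Hi z $ q $ p * cnj (wv z v q) * wv z v p)"
    by (simp add: sum_distrib_left sum_negf)
  finally show ?thesis using e1 by simp
qed

end


lemma quad_eval1:
  fixes T :: "'n::finite \<Rightarrow> 'n \<Rightarrow> complex"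
  shows "(\<Sum>i\<in>UNIV. \<Sum>m\<in>UNIV. (if i = a then x else 0) * cnj (if m = b then y else 0) * T i m) = x * cnj y * T a b"
proof -
  have f1: "(\<lambda>m. c * cnj (if m = b then y else 0) * T i m) = (\<lambda>m. if m = b then c * cnj y * T i b else 0)" for c i
    by auto
  have f2: "(\<lambda>i. (if i = a then x else 0) * cnj y * T i b) = (\<lambda>i. if i = a then x * cnj y * T a b else 0)"
    by auto
  have "(\<Sum>i\<in>UNIV. \<Sum>m\<in>UNIV. (if i = a then x else 0) * cnj (if m = b then y else 0) * T i m)
      = (\<Sum>i\<in>UNIV. (if i = a then x else 0) * cnj y * T i b)"
    unfolding f1 by simp
  also have "\<dots> = x * cnj y * T a b" unfolding f2 by simp
  finally show ?thesis .
qed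

lemma quad_eval:
  fixes T :: "'n::finite \<Rightarrow> 'n \<Rightarrow> complex"
  assumes "a \<noteq> b"
  shows "(\<Sum>i\<in>UNIV. \<Sum>m\<in>UNIV. (\<chi> k. if k = a then x else if k = b then y else 0) $ i
           * cnj ((\<chi> k. if k = a then x else if k = b then y else 0) $ m) * T i m)
     = x * cnj x * T a a + x * cnj y * T a b + y * cnj x * T b a + y * cnj y * T b b"
proof -
  let ?A = "\<lambda>i. if i = a then x else 0" and ?B = "\<lambda>i. if i = b then y else 0"
  have v: "(\<chi> k. if k = a then x else if k = b then y else 0) $ i = ?A i + ?B i" for i
    using assms by auto
  have "(\<Sum>i\<in>UNIV. \<Sum>m\<in>UNIV. (\<chi> k. if k = a then x else if k = b then y else 0) $ i
           * cnj ((\<chi> k. if k = a then x else if k = b then y else 0) $ m) * T i m)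
     = (\<Sum>i\<in>UNIV. \<Sum>m\<in>UNIV. ?A i * cnj (?A m) * T i m + ?A i * cnj (?B m) * T i m
          + ?B i * cnj (?A m) * T i m + ?B i * cnj (?B m) * T i m)"
    unfolding v by (intro sum.cong refl) (simp add: algebra_simps)
  also have "\<dots> = (\<Sum>i\<in>UNIV. \<Sum>m\<in>UNIV. ?A i * cnj (?A m) * T i m) + (\<Sum>i\<in>UNIV. \<Sum>m\<in>UNIV. ?A i * cnj (?B m) * T i m)
          + (\<Sum>i\<in>UNIV. \<Sum>m\<in>UNIV. ?B i * cnj (?A m) * T i m) + (\<Sum>i\<in>UNIV. \<Sum>m\<in>UNIV. ?B i * cnj (?B m) * T i m)"
    by (simp only: sum.distrib)
  also have "\<dots> = x * cnj x * T a a + x * cnj y * T a b + y * cnj x * T b a + y * cnj y * T b b"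
    by (simp only: quad_eval1)
  finally show ?thesis .
qed

lemma polarize:
  fixes T :: "'n::finite \<Rightarrow> 'n \<Rightarrow> complex"
  assumes "\<And>v::complex^'n. (\<Sum>i\<in>UNIV. \<Sum>m\<in>UNIV. v $ i * cnj (v $ m) * T i m) = 0"
  shows "T a b = 0"
proof (cases "a = b")
  case True
  have "(\<Sum>i\<in>UNIV. \<Sum>m\<in>UNIV. (\<chi> k. if k = a then 1 else 0) $ i * cnj ((\<chi> k. if k = a then 1 else 0) $ m) * T i m) = 0"
    by (rule assms)
  moreover have "(\<Sum>i\<in>UNIV. \<Sum>m\<in>UNIV. (\<chi> k. if k = a then 1 else 0) $ i * cnj ((\<chi> k. if k = a then 1 else 0) $ m) * T i m) = T a a"
    using quad_eval1[of a 1 a 1 T] by simp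
  ultimately show ?thesis using True by simp
next
  case False
  have e1: "(\<Sum>i\<in>UNIV. \<Sum>m\<in>UNIV. (\<chi> k. if k = a then 1 else 0) $ i * cnj ((\<chi> k. if k = a then 1 else 0) $ m) * T i m) = T a a"
    using quad_eval1[of a 1 a 1 T] by simp
  have e2: "(\<Sum>i\<in>UNIV. \<Sum>m\<in>UNIV. (\<chi> k. if k = b then 1 else 0) $ i * cnj ((\<chi> k. if k = b then 1 else 0) $ m) * T i m) = T b b"
    using quad_eval1[of b 1 b 1 T] by simp
  have aa: "T a a = 0" "T b b = 0" using e1 e2 assms by metis+
  have "1 * cnj 1 * T a a + 1 * cnj 1 * T a b + 1 * cnj 1 * T b a + 1 * cnj 1 * T b b = 0"
    using quad_eval[OF False, of 1 1 T] assms by metis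
  then have s1: "T a b + T b a = 0" using aa by simp
  have "1 * cnj 1 * T a a + 1 * cnj \<i> * T a b + \<i> * cnj 1 * T b a + \<i> * cnj \<i> * T b b = 0"
    using quad_eval[OF False, of 1 \<i> T] assms by metis
  then have s2: "- \<i> * T a b + \<i> * T b a = 0" using aa by simp
  from s1 s2 show ?thesis
    by (metis (no_types, lifting) add.inverse_inverse add.right_neutral complex_i_not_zero
        eq_neg_iff_add_eq_0 mult.commute mult_minus_left mult_zero_right nonzero_mult_div_cancel_left
        add_cancel_right_left distrib_left mult_2 zero_neq_numeral)
qed



context hsetup begin

lemma Hquad_zero:
  assumes z: "z \<in> U" and E: "(\<Sum>p\<in>UNIV. \<Sum>q\<in>UNIV. Hi z $ q $ p * cnj (w q) * w p) = 0"
  shows "w p = 0"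
proof -
  define y where "y = (\<chi> p. \<Sum>q\<in>UNIV. cnj (w q) * Hi z $ q $ p)"
  have c1: "(\<Sum>i\<in>UNIV. y $ i * h z $ i $ q) = cnj (w q)" for q
  proof -
    have "(\<Sum>i\<in>UNIV. y $ i * h z $ i $ q) = (\<Sum>i\<in>UNIV. \<Sum>r\<in>UNIV. cnj (w r) * (Hi z $ r $ i * h z $ i $ q))"
      by (simp add: y_def sum_distrib_left sum_distrib_right mult_ac)
    also have "\<dots> = (\<Sum>r\<in>UNIV. \<Sum>i\<in>UNIV. cnj (w r) * (Hi z $ r $ i * h z $ i $ q))" by (rule sum.swap)
    also have "\<dots> = (\<Sum>r\<in>UNIV. cnj (w r) * (\<Sum>i\<in>UNIV. Hi z $ r $ i * h z $ i $ q))"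
      by (simp add: sum_distrib_left)
    also have "\<dots> = cnj (w q)" by (simp only: HiL[OF z] sum_delta_mult)
    finally show ?thesis .
  qed
  have c2: "w q = (\<Sum>i\<in>UNIV. h z $ q $ i * cnj (y $ i))" for q
  proof -
    have "w q = cnj (\<Sum>i\<in>UNIV. y $ i * h z $ i $ q)" by (simp add: c1)
    also have "\<dots> = (\<Sum>i\<in>UNIV. cnj (y $ i) * cnj (h z $ i $ q))" by simp
    also have "\<dots> = (\<Sum>i\<in>UNIV. h z $ q $ i * cnj (y $ i))"
      by (rule sum.cong[OF refl]) (simp add: herm[OF z, of q] mult.commute)
    finally show ?thesis .
  qed
  have "(\<Sum>p\<in>UNIV. \<Sum>q\<in>UNIV. Hi z $ q $ p * cnj (w q) * w p) = (\<Sum>p\<in>UNIV. y $ p * w p)"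
    by (simp add: y_def sum_distrib_left sum_distrib_right mult_ac)
  also have "\<dots> = (\<Sum>p\<in>UNIV. \<Sum>i\<in>UNIV. y $ p * h z $ p $ i * cnj (y $ i))"
    by (simp add: c2 sum_distrib_left mult_ac)
  finally have "(\<Sum>p\<in>UNIV. \<Sum>i\<in>UNIV. y $ p * h z $ p $ i * cnj (y $ i)) = 0" using E by simp
  then have "y = 0" using posdef[OF z, of y] by force
  then have "cnj (w p) = 0" using c1[of p] by simp
  then show ?thesis by simp
qed

lemma wv_zero_imp:
  assumes z: "z \<in> U" and W: "\<And>v p. wv z v p = 0"
  shows "dh (Inl i) p m z = dh (Inl p) i m z"
proof -
  have "(\<lambda>i m. dh (Inl i) p m z - dh (Inl p) i m z) i m = 0"
    by (rule polarize) (use W in \<open>simp add: wv_def\<close>)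
  then show ?thesis by simp
qed

lemma main_local:
  assumes z: "z \<in> U" and ts: "t \<noteq> s" "t \<noteq> 2 - s"
    and hsc: "\<forall>v::complex^'n. v \<noteq> 0 \<longrightarrow> gaud_HSC t h z v = gaud_HSC s h z v"
  shows "wv z v p = 0"
proof (cases "v = 0")
  case True
  then show ?thesis by (simp add: wv_def)
next
  case False
  define d where "d = (\<Sum>i\<in>UNIV. \<Sum>j\<in>UNIV. v $ i * cnj (v $ j) * h z $ i $ j)"
  have "Re d > 0"
    using posdef[OF z False] unfolding d_def by (simp add: mult_ac)
  then have d0: "d \<noteq> 0" by auto
  define N0 where "N0 = ctr z v (\<lambda>k i j l. C0 k (Inl i) (Inr j) l z)"
  define N2 where "N2 = ctr z v (\<lambda>k i j l. C2 k (Inl i) (Inr j) l z)"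
  have ctrc: "ctr z v (\<lambda>k i j l. gaud_curv r h k (Inl i) (Inr j) l z) = N0 + (complex_of_real (1 - r))^2 * N2" for r
  proof -
    have "ctr z v (\<lambda>k i j l. gaud_curv r h k (Inl i) (Inr j) l z)
       = ctr z v (\<lambda>k i j l. C0 k (Inl i) (Inr j) l z + complex_of_real (1 - r) * C1 k (Inl i) (Inr j) l z
           + (complex_of_real (1 - r))^2 * C2 k (Inl i) (Inr j) l z)"
      by (simp add: curv_dec[OF z])
    also have "\<dots> = N0 + complex_of_real (1 - r) * ctr z v (\<lambda>k i j l. C1 k (Inl i) (Inr j) l z) + (complex_of_real (1 - r))^2 * N2"
      unfolding N0_def N2_def by (simp only: ctr_add ctr_cmult)
    also have "\<dots> = N0 + (complex_of_real (1 - r))^2 * N2"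
      by (simp add: ctr_C1[OF z])
    finally show ?thesis .
  qed
  have "gaud_HSC t h z v = gaud_HSC s h z v" using hsc False by blast
  then have "(N0 + (complex_of_real (1 - t))^2 * N2) / d^2 = (N0 + (complex_of_real (1 - s))^2 * N2) / d^2"
    by (simp only: HSC_ctr ctrc d_def)
  then have "(complex_of_real (1 - t))^2 * N2 = (complex_of_real (1 - s))^2 * N2"
    using d0 by (simp add: divide_cancel_right)
  moreover have "(complex_of_real (1 - t))^2 \<noteq> (complex_of_real (1 - s))^2"
  proof
    assume "(complex_of_real (1 - t))^2 = (complex_of_real (1 - s))^2"
    then have "complex_of_real ((1 - t)^2) = complex_of_real ((1 - s)^2)" by simp
    then have "(1 - t)^2 = (1 - s)^2" using of_real_eq_iff by blast
    then have "1 - t = 1 - s \<or> 1 - t = - (1 - s)" using power2_eq_iff by blast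
    then show False using ts by auto
  qed
  ultimately have "N2 = 0" by simp
  then have "(\<Sum>p\<in>UNIV. \<Sum>q\<in>UNIV. Hi z $ q $ p * cnj (wv z v q) * wv z v p) = 0"
    unfolding N2_def ctr_C2[OF z] by simp
  then show ?thesis by (rule Hquad_zero[OF z])
qed

end

theorem theorem1p8:
  fixes U :: "(complex^'n::finite) set"
    and h :: "complex^'n \<Rightarrow> complex^'n^'n"
    and t s :: real
  assumes "open U"
    and "hermitian_metric_on U h"
    and "\<forall>z\<in>U. \<forall>v::complex^'n. v \<noteq> 0 \<longrightarrow> gaud_HSC t h z v = gaud_HSC s h z v"
  shows "t = s \<or> t = 2 - s \<or> kahler_on U h"
proof -
  interpret hsetup U h using assms(1,2) by unfold_locales
  have "kahler_on U h" if ts: "t \<noteq> s" "t \<noteq> 2 - s"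
    unfolding kahler_on_def
  proof (intro ballI allI conjI)
    fix z i j k assume z: "z \<in> U"
    have W: "\<And>v p. wv z v p = 0"
      using main_local[OF z ts] assms(3) z by blast
    show "wirt (Inl k) (\<lambda>w. h w $ i $ j) z = wirt (Inl i) (\<lambda>w. h w $ k $ j) z"
      by (rule wv_zero_imp[OF z W])
    show "wirt (Inr k) (\<lambda>w. h w $ i $ j) z = wirt (Inr j) (\<lambda>w. h w $ i $ k) z"
      unfolding dh_cnj[OF z] using wv_zero_imp[OF z W, of k j i] by simp
  qed
  then show ?thesis by blast
qed


end
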